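(* For any $n,L\geq 1$ and any random $n\times n$ matrix $X$ with entries in $\mathbb{Z}$, $$\mathbb{P}\Bigl(\exists\, Q\in\textstyle\bigcup_{\ell=2}^{L}\mathbb{O}_n(\ell,\mathbb{Q}):\ Q^{T}XQ\in\mathbb{Z}^{n\times n}\Bigr)\leq\frac{1}{2^n n!}\sum_{\ell=2}^{L}\mathbb{E}[N_n(\ell)].$$
   Context: The level of a rational matrix $Q$ is the least integer $\ell\geq 1$ with $\ell Q$ having integer entries. $\mathbb{O}_n(\ell,\mathbb{Q})$ denotes the set of all rational orthogonal $n\times n$ matrices with level $\ell$. For $X\in\mathbb{Z}^{n\times n}$, $N_n(\ell)=\#\{Q\in\mathbb{O}_n(\ell,\mathbb{Q}): Q^{T}XQ\in\mathbb{Z}^{n\times n}\}$. *)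

theory Defs
  imports "HOL-Analysis.Analysis" "HOL-Probability.Probability"
begin

definition int_to_rat_mat :: "int^'n^'n \<Rightarrow> rat^'n^'n" where
  "int_to_rat_mat X = (\<chi> i j. of_int (X $ i $ j))"

definition is_integral_mat :: "rat^'n^'n \<Rightarrow> bool" where
  "is_integral_mat A \<longleftrightarrow> (\<forall>i j. A $ i $ j \<in> \<int>)"

definition rat_orthogonal :: "rat^'n^'n \<Rightarrow> bool" where
  "rat_orthogonal Q \<longleftrightarrow> transpose Q ** Q = mat 1"

definition mat_level :: "rat^'n^'n \<Rightarrow> nat" where
  "mat_level Q = (LEAST l. l \<ge> 1 \<and> is_integral_mat (\<chi> i j. of_nat l * Q $ i $ j))"

definition O_level :: "nat \<Rightarrow> (rat^'n^'n) set" where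
  "O_level l = {Q. rat_orthogonal Q \<and> mat_level Q = l}"

definition N_count :: "int^'n^'n \<Rightarrow> nat \<Rightarrow> nat" where
  "N_count X l = card {Q \<in> O_level l.
      is_integral_mat (transpose Q ** int_to_rat_mat X ** Q)}"

end

theory Submission
  imports Defs
begin

definition sperm :: "('n \<Rightarrow> 'n) \<Rightarrow> ('n \<Rightarrow> rat) \<Rightarrow> rat^'n^'n" where
  "sperm \<sigma> s = (\<chi> i j. if i = \<sigma> j then s j else 0)"

lemma mul_sperm:
  "(A::rat^'n^'n) ** sperm \<sigma> s = (\<chi> i j. A $ i $ (\<sigma> j) * s j)"
proof -
  have "\<And>i j. (\<Sum>k\<in>UNIV. A $ i $ k * (if k = \<sigma> j then s j else 0)) = A $ i $ (\<sigma> j) * s j"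
    by (simp add: if_distrib cong: if_cong)
  then show ?thesis
    by (simp add: matrix_matrix_mult_def sperm_def)
qed

lemma sperm_T_mul:
  "transpose (sperm \<sigma> s) ** (A::rat^'n^'n) = (\<chi> i j. s i * A $ (\<sigma> i) $ j)"
proof -
  have "\<And>i j. (\<Sum>k\<in>UNIV. (if k = \<sigma> i then s i else 0) * A $ k $ j) = s i * A $ (\<sigma> i) $ j"
  proof -
    fix i j
    have "(\<Sum>k\<in>UNIV. (if k = \<sigma> i then s i else 0) * A $ k $ j) = (\<Sum>k\<in>UNIV. if k = \<sigma> i then s i * A $ k $ j else 0)"
      by (rule sum.cong) auto
    then show "(\<Sum>k\<in>UNIV. (if k = \<sigma> i then s i else 0) * A $ k $ j) = s i * A $ (\<sigma> i) $ j" by simp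
  qed
  then show ?thesis
    by (simp add: matrix_matrix_mult_def sperm_def transpose_def)
qed

definition signs :: "('n \<Rightarrow> rat) set" where
  "signs = PiE UNIV (\<lambda>_. {-1, 1})"

lemma signs_val: "s \<in> signs \<Longrightarrow> s i = 1 \<or> s i = -1"
  unfolding signs_def by (auto simp: PiE_def Pi_def)

lemma signs_sq: "s \<in> signs \<Longrightarrow> s i * s i = 1"
  using signs_val[of s i] by auto

lemma signs_ne0: "s \<in> signs \<Longrightarrow> s i \<noteq> 0"
  using signs_val[of s i] by auto

lemma sperm_orth:
  assumes "\<sigma> permutes UNIV" "s \<in> signs"
  shows "transpose (sperm \<sigma> s) ** sperm \<sigma> s = mat 1"
proof -
  have inj: "\<sigma> i = \<sigma> j \<longleftrightarrow> i = j" for i j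
    using assms(1) by (metis permutes_inj injD)
  show ?thesis
    unfolding sperm_T_mul
    by (simp add: vec_eq_iff sperm_def mat_def inj signs_sq[OF assms(2)])
qed

lemma orth_mul:
  assumes "rat_orthogonal Q" "\<sigma> permutes UNIV" "s \<in> signs"
  shows "rat_orthogonal (Q ** sperm \<sigma> s)"
proof -
  have "transpose (Q ** sperm \<sigma> s) ** (Q ** sperm \<sigma> s)
      = transpose (sperm \<sigma> s) ** ((transpose Q ** Q) ** sperm \<sigma> s)"
    by (simp add: matrix_transpose_mul matrix_mul_assoc)
  also have "\<dots> = mat 1"
    using assms by (simp add: rat_orthogonal_def matrix_mul_lid sperm_orth)
  finally show ?thesis by (simp add: rat_orthogonal_def)
qed

lemma integral_mul:
  assumes "is_integral_mat M" "s \<in> signs"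
  shows "is_integral_mat (transpose (sperm \<sigma> s) ** M ** sperm \<sigma> s)"
proof -
  have "s i \<in> \<int>" for i using signs_val[OF assms(2), of i] by auto
  then show ?thesis using assms(1)
    unfolding is_integral_mat_def sperm_T_mul mul_sperm
    by simp
qed

lemma level_pred_mul:
  assumes "\<sigma> permutes UNIV" "s \<in> signs"
  shows "is_integral_mat (\<chi> i j. of_nat l * (Q ** sperm \<sigma> s) $ i $ j)
     \<longleftrightarrow> is_integral_mat (\<chi> i j. of_nat l * Q $ i $ j)"
proof -
  have s: "s i = 1 \<or> s i = -1" for i using signs_val[OF assms(2)] by blast
  have "(\<forall>i j. of_nat l * (Q $ i $ \<sigma> j * s j) \<in> \<int>) \<longleftrightarrow> (\<forall>i j. of_nat l * Q $ i $ \<sigma> j \<in> (\<int>::rat set))"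
  proof -
    have "of_nat l * (Q $ i $ \<sigma> j * s j) \<in> \<int> \<longleftrightarrow> of_nat l * Q $ i $ \<sigma> j \<in> (\<int>::rat set)" for i j
    proof (cases "s j = 1")
      case False
      then have "s j = -1" using s by blast
      then show ?thesis
        by (metis Ints_minus minus_minus mult_minus_right mult.right_neutral)
    qed simp
    then show ?thesis by blast
  qed
  also have "\<dots> \<longleftrightarrow> (\<forall>i j. of_nat l * Q $ i $ j \<in> (\<int>::rat set))"
    using assms(1) by (metis permutes_surj surj_f_inv_f)
  finally show ?thesis unfolding is_integral_mat_def mul_sperm by simp
qed

lemma level_mul:
  assumes "\<sigma> permutes UNIV" "s \<in> signs"
  shows "mat_level (Q ** sperm \<sigma> s) = mat_level Q"
  unfolding mat_level_def using level_pred_mul[OF assms] by simp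

lemma sperm_inj:
  assumes "sperm \<sigma>1 s1 = sperm \<sigma>2 s2" "s1 \<in> signs"
  shows "\<sigma>1 = \<sigma>2 \<and> s1 = s2"
proof -
  have "\<sigma>1 j = \<sigma>2 j \<and> s1 j = s2 j" for j
  proof -
    have "sperm \<sigma>1 s1 $ \<sigma>1 j $ j = sperm \<sigma>2 s2 $ \<sigma>1 j $ j" using assms(1) by simp
    then have "s1 j = (if \<sigma>1 j = \<sigma>2 j then s2 j else 0)" by (simp add: sperm_def)
    then show ?thesis using signs_ne0[OF assms(2), of j] by (auto split: if_splits)
  qed
  then show ?thesis by auto
qed

lemma card_SP: "card ({\<sigma>. \<sigma> permutes (UNIV::'n::finite set)} \<times> (signs :: ('n \<Rightarrow> rat) set))
   = fact CARD('n) * 2 ^ CARD('n)"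
proof -
  have "card {\<sigma>. \<sigma> permutes (UNIV::'n set)} = fact CARD('n)"
    by (rule card_permutations) auto
  moreover have "card (signs :: ('n \<Rightarrow> rat) set) = 2 ^ CARD('n)"
  proof -
    have "card {-1, 1::rat} = 2" by simp
    then show ?thesis unfolding signs_def by (simp add: card_PiE del: card_insert_if card.insert)
  qed
  ultimately show ?thesis by (simp add: card_cartesian_product)
qed

lemma finite_SP: "finite ({\<sigma>. \<sigma> permutes (UNIV::'n::finite set)} \<times> (signs :: ('n \<Rightarrow> rat) set))"
  unfolding signs_def by (intro finite_cartesian_product finite_PiE) (auto simp: finite_permutations)

lemma level_witness:
  fixes Q :: "rat^'n^'n"
  shows "\<exists>l. l \<ge> 1 \<and> is_integral_mat (\<chi> i j. of_nat l * Q $ i $ j)"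
proof -
  define d where "d = (\<lambda>p::'n\<times>'n. snd (quotient_of (Q $ fst p $ snd p)))"
  define D where "D = (\<Prod>p\<in>UNIV. d p)"
  have dpos: "d p > 0" for p unfolding d_def
    by (metis prod.collapse quotient_of_denom_pos)
  have Dpos: "D > 0" unfolding D_def using dpos by (simp add: prod_pos)
  have "of_int D * Q $ i $ j \<in> (\<int>::rat set)" for i j
  proof -
    obtain a b where ab: "quotient_of (Q $ i $ j) = (a, b)" by fastforce
    have b: "b = d (i,j)" using ab by (simp add: d_def)
    have bpos: "b > 0" using dpos[of "(i,j)"] b by simp
    have qa: "Q $ i $ j = of_int a / of_int b" using quotient_of_div[OF ab] .
    have "b dvd D" unfolding D_def b by (rule dvd_prodI) auto
    then obtain k where k: "D = b * k" by (auto simp: dvd_def)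
    have "of_int D * Q $ i $ j = (of_int k * of_int a :: rat)"
      using bpos by (simp add: k qa field_simps)
    then show ?thesis by simp
  qed
  moreover have "(of_nat (nat D) :: rat) = of_int D" using Dpos by simp
  ultimately show ?thesis using Dpos unfolding is_integral_mat_def
    by (intro exI[of _ "nat D"]) auto
qed

lemma orth_entry_bound:
  assumes "rat_orthogonal Q"
  shows "\<bar>Q $ i $ j\<bar> \<le> 1"
proof -
  have "(transpose Q ** Q) $ j $ j = 1" using assms by (simp add: rat_orthogonal_def mat_def)
  then have s: "(\<Sum>k\<in>UNIV. Q $ k $ j * Q $ k $ j) = 1"
    by (simp add: matrix_matrix_mult_def transpose_def)
  have "Q $ i $ j * Q $ i $ j \<le> (\<Sum>k\<in>UNIV. Q $ k $ j * Q $ k $ j)"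
    by (rule member_le_sum) auto
  then have "(Q $ i $ j)^2 \<le> 1" using s by (simp add: power2_eq_square)
  then show ?thesis by (simp add: abs_square_le_1)
qed

lemma finite_O_level:
  assumes "l \<ge> 1"
  shows "finite (O_level l :: (rat^'n^'n) set)"
proof -
  let ?B = "PiE (UNIV::'n set) (\<lambda>_. PiE (UNIV::'n set) (\<lambda>_. {-int l..int l}))"
  have "O_level l \<subseteq> (\<lambda>f. \<chi> i j. of_int (f i j) / of_nat l) ` ?B"
  proof
    fix Q :: "rat^'n^'n" assume Q: "Q \<in> O_level l"
    then have orth: "rat_orthogonal Q" and lev: "mat_level Q = l" by (auto simp: O_level_def)
    have "is_integral_mat (\<chi> i j. of_nat (mat_level Q) * Q $ i $ j)"
      unfolding mat_level_def using LeastI_ex[OF level_witness[of Q]] by blast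
    then have int: "of_nat l * Q $ i $ j \<in> (\<int>::rat set)" for i j
      using lev by (simp add: is_integral_mat_def)
    define f where "f = (\<lambda>i j. \<lfloor>of_nat l * Q $ i $ j\<rfloor>)"
    have fe: "of_int (f i j) = of_nat l * Q $ i $ j" for i j
      using int[of i j] unfolding f_def by (metis Ints_cases floor_of_int)
    have "\<bar>of_nat l * Q $ i $ j\<bar> \<le> (of_nat l :: rat)" for i j
      using orth_entry_bound[OF orth, of i j]
      by (simp add: abs_mult mult_left_le)
    then have "\<bar>of_int (f i j)\<bar> \<le> (of_int (int l) :: rat)" for i j using fe by simp
    then have "\<bar>f i j\<bar> \<le> int l" for i j by (metis of_int_abs of_int_le_iff)
    then have "f \<in> ?B" by (auto simp: PiE_def Pi_def extensional_def abs_le_iff) (smt (verit))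
    moreover have "Q = (\<chi> i j. of_int (f i j) / of_nat l)"
      using assms by (simp add: vec_eq_iff fe)
    ultimately show "Q \<in> (\<lambda>f. \<chi> i j. of_int (f i j) / of_nat l) ` ?B" by blast
  qed
  moreover have "finite ?B" by (intro finite_PiE) auto
  ultimately show ?thesis by (meson finite_imageI finite_subset)
qed

lemma N_count_ge:
  assumes l: "l \<ge> 1" and Q: "Q \<in> O_level l"
    and int: "is_integral_mat (transpose Q ** int_to_rat_mat X ** Q)"
  shows "fact CARD('n) * 2 ^ CARD('n) \<le> N_count (X::int^'n^'n) l"
proof -
  let ?SP = "{\<sigma>. \<sigma> permutes (UNIV::'n set)} \<times> (signs :: ('n \<Rightarrow> rat) set)"
  let ?T = "{Q \<in> O_level l. is_integral_mat (transpose Q ** int_to_rat_mat X ** Q)}"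
  let ?g = "\<lambda>(\<sigma>, s). Q ** sperm \<sigma> s"
  have orth: "rat_orthogonal Q" and lev: "mat_level Q = l" using Q by (auto simp: O_level_def)
  have sub: "?g ` ?SP \<subseteq> ?T"
  proof
    fix A assume "A \<in> ?g ` ?SP"
    then obtain \<sigma> s where p: "\<sigma> permutes (UNIV::'n set)" and s: "s \<in> signs" and A: "A = Q ** sperm \<sigma> s"
      by auto
    have "transpose (Q ** sperm \<sigma> s) ** int_to_rat_mat X ** (Q ** sperm \<sigma> s)
       = transpose (sperm \<sigma> s) ** (transpose Q ** int_to_rat_mat X ** Q) ** sperm \<sigma> s"
      by (simp add: matrix_transpose_mul matrix_mul_assoc)
    then show "A \<in> ?T" unfolding A
      using orth_mul[OF orth p s] level_mul[OF p s] lev integral_mul[OF int s]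
      by (simp add: O_level_def)
  qed
  have inj: "inj_on ?g ?SP"
  proof (rule inj_onI, clarify)
    fix \<sigma>1 \<sigma>2 :: "'n \<Rightarrow> 'n" and s1 s2 :: "'n \<Rightarrow> rat"
    assume s1: "s1 \<in> signs" and e: "Q ** sperm \<sigma>1 s1 = Q ** sperm \<sigma>2 s2"
    have "transpose Q ** (Q ** sperm \<sigma>1 s1) = transpose Q ** (Q ** sperm \<sigma>2 s2)" using e by simp
    then have "sperm \<sigma>1 s1 = sperm \<sigma>2 s2" using orth
      by (simp add: matrix_mul_assoc rat_orthogonal_def matrix_mul_lid)
    then show "\<sigma>1 = \<sigma>2 \<and> s1 = s2" using sperm_inj s1 by blast
  qed
  have "card ?SP = card (?g ` ?SP)" using card_image[OF inj] by simp
  also have "\<dots> \<le> card ?T"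
    by (rule card_mono[OF _ sub]) (use finite_O_level[OF l] in auto)
  finally show ?thesis unfolding N_count_def card_SP .
qed

lemma N_count_le:
  assumes "l \<ge> 1"
  shows "N_count (X::int^'n^'n) l \<le> card (O_level l :: (rat^'n^'n) set)"
  unfolding N_count_def by (rule card_mono) (use finite_O_level[OF assms] in auto)

theorem lemma3p6:
  fixes p :: "(int^'n^'n) pmf" and L :: nat
  assumes "L \<ge> 1"
  shows "measure_pmf.prob p {X. \<exists>l\<in>{2..L}. \<exists>Q\<in>O_level l.
            is_integral_mat (transpose Q ** int_to_rat_mat X ** Q)}
         \<le> 1 / (2 ^ CARD('n) * fact (CARD('n)))
            * (\<Sum>l=2..L. measure_pmf.expectation p (\<lambda>X. real (N_count X l)))"
proof -
  define E where "E = {X. \<exists>l\<in>{2..L}. \<exists>Q\<in>O_level l.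
            is_integral_mat (transpose Q ** int_to_rat_mat X ** (Q::rat^'n^'n))}"
  define c :: real where "c = 2 ^ CARD('n) * fact (CARD('n))"
  have cpos: "c > 0" unfolding c_def by simp
  define F where "F = (\<lambda>X::int^'n^'n. \<Sum>l=2..L. real (N_count X l))"
  have intN: "integrable (measure_pmf p) (\<lambda>X. real (N_count X l))" if "l \<in> {2..L}" for l
  proof (rule measure_pmf.integrable_const_bound[where B = "real (card (O_level l :: (rat^'n^'n) set))"])
    show "AE x in measure_pmf p. norm (real (N_count x l)) \<le> real (card (O_level l :: (rat^'n^'n) set))"
      using N_count_le[of l] that by (intro AE_I2) auto
  qed simp
  have intF: "integrable (measure_pmf p) (\<lambda>X. F X / c)"
    unfolding F_def using intN by (intro integrable_divide integrable_sum) auto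
  have pt: "indicator E X \<le> F X / c" for X
  proof (cases "X \<in> E")
    case True
    then obtain l Q where l: "l \<in> {2..L}" and Q: "Q \<in> O_level l"
      and int: "is_integral_mat (transpose Q ** int_to_rat_mat X ** Q)" unfolding E_def by blast
    have "c = real (fact CARD('n) * 2 ^ CARD('n))" unfolding c_def by simp
    also have "\<dots> \<le> real (N_count X l)" using N_count_ge[OF _ Q int] l by (simp only: of_nat_le_iff) simp
    also have "\<dots> \<le> F X" unfolding F_def
      by (rule member_le_sum) (use l in auto)
    finally show ?thesis using True cpos by simp
  next
    case False
    have "F X \<ge> 0" unfolding F_def by (simp add: sum_nonneg)
    then show ?thesis using False cpos by simp
  qed
  have "measure_pmf.prob p E = measure_pmf.expectation p (indicator E)"
    by (simp add: measure_pmf.emeasure_finite)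
  also have "\<dots> \<le> measure_pmf.expectation p (\<lambda>X. F X / c)"
    by (rule integral_mono[OF _ intF pt], rule measure_pmf.integrable_const_bound[where B=1]) auto
  also have "\<dots> = measure_pmf.expectation p F / c" by simp
  also have "measure_pmf.expectation p F = (\<Sum>l=2..L. measure_pmf.expectation p (\<lambda>X. real (N_count X l)))"
    unfolding F_def using intN by (rule Bochner_Integration.integral_sum) auto
  finally show ?thesis unfolding E_def c_def by simp
qed

end
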